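(* For every $\beta\in[0,1)$ and every $G\in\mathscr S$, there exists a sequence of functions $G_N:\widehat\Lambda_N/N\to\mathbb R$, $N\in\mathbb N$, with $G_N(0)=G_N(1)=0$ for all $N$, such that $$\sup_{x\in\widehat\Lambda_N}|G_N(\tfrac xN)-G(\tfrac xN)|\to0\quad\text{and}\quad\sup_{x\in\widehat\Lambda_N}|\mathcal A^NG_N(\tfrac xN)-\alpha G''(\tfrac xN)|\to0\quad(N\to\infty).$$
   Context: Fix $\alpha,\alpha_L,\alpha_R>0$, $\beta\in[0,1)$, $\Lambda_N=\{1,\dots,N-1\}$, $\widehat\Lambda_N=\{0,\dots,N\}$. $A^N$ is the generator of a random walk on $\widehat\Lambda_N$ absorbed at $\{0,N\}$: for $f:\widehat\Lambda_N\to\mathbb R$, $A^Nf(x)=\mathbf 1_{\{x\in\Lambda_N\}}N^2\sum_{y\in\Lambda_N,|y-x|=1}\alpha(f(y)-f(x))+\mathbf 1_{\{x=1\}}N^{2-\beta}\alpha_L(f(0)-f(1))+\mathbf 1_{\{x=N-1\}}N^{2-\beta}\alpha_R(f(N)-f(N-1))$ (so $A^Nf(0)=A^Nf(N)=0$). For $F:\widehat\Lambda_N/N\to\mathbb R$ set $\mathcal A^NF(\tfrac xN):=A^N[F(\tfrac\cdot N)](x)$. $\mathscr S$ is the Dirichlet test function space: with $\mathcal L$ the nonnegative self-adjoint operator $F\mapsto-\alpha F''$ on $L^2([0,1])$ with domain $\{F\in\mathcal W^{1,2}_0:F''\in L^2\}$, eigenvalues $\lambda_n$ and orthonormal eigenbasis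 $\psi_n$, $\mathscr S=\{F\in L^2:\sum_n(1+\lambda_n)^k\langle F,\psi_n\rangle^2<\infty\ \forall k\in\mathbb Z\}$; its elements are $\mathcal C^\infty([0,1])$ functions (derivatives extend continuously to $[0,1]$). *)

theory Defs
  imports "HOL-Analysis.Analysis"
begin

text \<open>Dirichlet eigenbasis of F \<mapsto> -alpha F'' on L^2([0,1]) (n \<ge> 1):
  psi_n(x) = sqrt 2 sin(n pi x), lambda_n = alpha (n pi)^2.
  Index shift: n = Suc k.\<close>

definition dir_psi :: "nat \<Rightarrow> real \<Rightarrow> real" where
  "dir_psi n x = sqrt 2 * sin (real n * pi * x)"

definition dir_lambda :: "real \<Rightarrow> nat \<Rightarrow> real" where
  "dir_lambda \<alpha> n = \<alpha> * (real n * pi)^2"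

text \<open>Elements of S are identified with their
  smooth representative on [0,1]; we require G continuous on [0,1] to pin down that
  representative (values off [0,1] are irrelevant).\<close>

definition in_S :: "real \<Rightarrow> (real \<Rightarrow> real) \<Rightarrow> bool" where
  "in_S \<alpha> G \<longleftrightarrow> continuous_on {0..1} G \<and>
     (\<forall>k::int. summable (\<lambda>m. (1 + dir_lambda \<alpha> (Suc m)) powi k *
        (integral {0..1} (\<lambda>x. G x * dir_psi (Suc m) x))^2))"

text \<open>Derivatives on [0,1] (one-sided at the endpoints), i.e. the continuous
  extensions to [0,1] of the derivatives.\<close>

definition d01 :: "(real \<Rightarrow> real) \<Rightarrow> real \<Rightarrow> real" where
  "d01 F x = vector_derivative F (at x within {0..1})"

definition d2_01 :: "(real \<Rightarrow> real) \<Rightarrow> real \<Rightarrow> real" where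
  "d2_01 F x = d01 (d01 F) x"

text \<open>The rescaled generator: cA N F (x/N) = A^N [F(./N)](x), x \<in> {0..N}.\<close>

definition genA :: "real \<Rightarrow> real \<Rightarrow> real \<Rightarrow> real \<Rightarrow> nat \<Rightarrow> (real \<Rightarrow> real) \<Rightarrow> nat \<Rightarrow> real" where
  "genA \<alpha> \<alpha>L \<alpha>R \<beta> N F x =
     (if 1 \<le> x \<and> x \<le> N - 1 then
        (real N)^2 * (\<Sum>y\<in>{y. 1 \<le> y \<and> y \<le> N - 1 \<and> (y = x + 1 \<or> x = y + 1)}.
            \<alpha> * (F (real y / real N) - F (real x / real N)))
        + (if x = 1 then real N powr (2 - \<beta>) * \<alpha>L * (F 0 - F (1 / real N)) else 0)
        + (if x = N - 1 then real N powr (2 - \<beta>) * \<alpha>R *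
              (F 1 - F (real (N - 1) / real N)) else 0)
      else 0)"

end

theory Submission
  imports Defs
begin


definition om :: "nat \<Rightarrow> real" where "om m = real (Suc m) * pi"
definition cf :: "(real \<Rightarrow> real) \<Rightarrow> nat \<Rightarrow> real" where
  "cf G m = integral {0..1} (\<lambda>x. G x * dir_psi (Suc m) x)"
definition bc :: "(real \<Rightarrow> real) \<Rightarrow> nat \<Rightarrow> real" where
  "bc G m = sqrt 2 * cf G m"

lemma om_ge1: "om m \<ge> 1"
proof -
  have "real (Suc m) \<ge> 1" by simp
  moreover have "pi \<ge> 1" using pi_gt3 by linarith
  ultimately have "1 * 1 \<le> real (Suc m) * pi" by (intro mult_mono) auto
  then show ?thesis by (simp add: om_def)
qed

lemma om_ge_Suc: "om m \<ge> real (Suc m)"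
  using pi_gt3 by (simp add: om_def)

lemma summable_inv_sq: "summable (\<lambda>m. inverse (real (Suc m) ^ 2))"
proof -
  have "summable (\<lambda>n. inverse (real n ^ 2))" using inverse_power_summable[of 2] by simp
  then show ?thesis using summable_Suc_iff[of "\<lambda>n. inverse (real n ^ 2)"] by simp
qed

lemma coeff_decay:
  assumes a: "\<alpha> > 0" and S: "in_S \<alpha> G"
  shows "summable (\<lambda>m. \<bar>bc G m\<bar> * om m ^ 4)"
proof -
  have s6: "summable (\<lambda>m. (1 + dir_lambda \<alpha> (Suc m)) powi 6 * (cf G m)^2)"
    using S unfolding in_S_def cf_def by blast
  have lam: "dir_lambda \<alpha> (Suc m) = \<alpha> * om m ^ 2" for m
    by (simp add: dir_lambda_def om_def)
  have s6': "summable (\<lambda>m. (1 + dir_lambda \<alpha> (Suc m)) ^ 6 * (cf G m)^2)"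
    using s6 by (simp add: power_int_def)
  have b1: "(cf G m)^2 * om m ^ 12 \<le> (1 + dir_lambda \<alpha> (Suc m)) ^ 6 * (cf G m)^2 / \<alpha>^6" for m
  proof -
    have "(\<alpha> * om m ^ 2) ^ 6 \<le> (1 + \<alpha> * om m ^ 2) ^ 6"
      using a by (intro power_mono) auto
    then have "\<alpha>^6 * om m ^ 12 \<le> (1 + dir_lambda \<alpha> (Suc m)) ^ 6"
      by (simp add: lam power_mult_distrib power_mult[symmetric])
    then have "(cf G m)^2 * (\<alpha>^6 * om m ^ 12) \<le> (cf G m)^2 * (1 + dir_lambda \<alpha> (Suc m)) ^ 6"
      by (intro mult_left_mono) auto
    then show ?thesis using a by (simp add: field_simps)
  qed
  have b2: "inverse (om m ^ 4) \<le> inverse (real (Suc m) ^ 2)" for m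
  proof -
    have "real (Suc m) ^ 2 \<le> real (Suc m) ^ 4" by (intro power_increasing) auto
    also have "\<dots> \<le> om m ^ 4" using om_ge_Suc by (intro power_mono) auto
    finally show ?thesis by (intro le_imp_inverse_le) auto
  qed
  have b3: "\<bar>bc G m\<bar> * om m ^ 4 \<le> sqrt 2 * (((cf G m)^2 * om m ^ 12 + inverse (om m ^ 4)) / 2)" for m
  proof -
    have om0: "om m > 0" using om_ge1[of m] by linarith
    define A where "A = \<bar>cf G m\<bar> * om m ^ 6"
    define B where "B = inverse (om m ^ 2)"
    have "A * B \<le> (A^2 + B^2) / 2" using sum_squares_bound[of A B] by (simp add: field_simps power2_eq_square)
    moreover have "A * B = \<bar>cf G m\<bar> * om m ^ 4" using om0
      by (simp add: A_def B_def field_simps power2_eq_square eval_nat_numeral)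
    moreover have "A^2 = (cf G m)^2 * om m ^ 12" by (simp add: A_def power_mult_distrib power_mult[symmetric])
    moreover have "B^2 = inverse (om m ^ 4)" by (simp add: B_def power_mult[symmetric] power_inverse)
    ultimately have "\<bar>cf G m\<bar> * om m ^ 4 \<le> ((cf G m)^2 * om m ^ 12 + inverse (om m ^ 4)) / 2" by simp
    then show ?thesis by (simp add: bc_def abs_mult mult.assoc)
  qed
  have "summable (\<lambda>m. sqrt 2 * (((cf G m)^2 * om m ^ 12 + inverse (om m ^ 4)) / 2))"
  proof -
    have "summable (\<lambda>m. (cf G m)^2 * om m ^ 12)"
      apply (rule summable_comparison_test'[OF summable_divide[OF s6', of "\<alpha>^6"]])
      using b1 by auto
    moreover have "summable (\<lambda>m. inverse (om m ^ 4))"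
      apply (rule summable_comparison_test'[OF summable_inv_sq])
      using b2 om_ge1 by auto
    ultimately show ?thesis by (intro summable_mult summable_divide summable_add)
  qed
  then show ?thesis
    apply (rule summable_comparison_test')
    using b3 by auto
qed




definition Sf :: "(nat \<Rightarrow> real) \<Rightarrow> real \<Rightarrow> real" where
  "Sf b x = (\<Sum>m. b m * sin (om m * x))"
definition Sf1 :: "(nat \<Rightarrow> real) \<Rightarrow> real \<Rightarrow> real" where
  "Sf1 b x = (\<Sum>m. b m * om m * cos (om m * x))"
definition Sf2 :: "(nat \<Rightarrow> real) \<Rightarrow> real \<Rightarrow> real" where
  "Sf2 b x = (\<Sum>m. - (b m * om m ^ 2 * sin (om m * x)))"

lemma om_pow_mono: "j \<le> 4 \<Longrightarrow> om m ^ j \<le> om m ^ 4"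
  using om_ge1 by (intro power_increasing) auto

lemma term_bound0: "\<bar>b m * sin (om m * x)\<bar> \<le> \<bar>b m\<bar> * om m ^ 4"
proof -
  have "\<bar>b m * sin (om m * x)\<bar> \<le> \<bar>b m\<bar> * 1" by (simp add: abs_mult mult_left_le)
  also have "\<dots> \<le> \<bar>b m\<bar> * om m ^ 4" using om_pow_mono[of 0 m] by (intro mult_left_mono) auto
  finally show ?thesis .
qed

lemma term_bound1: "\<bar>b m * om m * cos (om m * x)\<bar> \<le> \<bar>b m\<bar> * om m ^ 4"
proof -
  have o: "om m \<ge> 0" using om_ge1[of m] by linarith
  have "\<bar>b m * om m * cos (om m * x)\<bar> \<le> \<bar>b m\<bar> * om m ^ 1 * 1"
    using o by (simp add: abs_mult mult_left_le)
  also have "\<dots> \<le> \<bar>b m\<bar> * om m ^ 4" using om_pow_mono[of 1 m] by (simp add: mult_left_mono)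
  finally show ?thesis .
qed

lemma term_bound2: "\<bar>- (b m * om m ^ 2 * sin (om m * x))\<bar> \<le> \<bar>b m\<bar> * om m ^ 4"
proof -
  have o: "om m \<ge> 0" using om_ge1[of m] by linarith
  have "\<bar>- (b m * om m ^ 2 * sin (om m * x))\<bar> \<le> \<bar>b m\<bar> * om m ^ 2 * 1"
    using o by (simp add: abs_mult mult_left_le)
  also have "\<dots> \<le> \<bar>b m\<bar> * om m ^ 4" using om_pow_mono[of 2 m] by (simp add: mult_left_mono)
  finally show ?thesis .
qed

lemma summ0: "summable (\<lambda>m. \<bar>b m\<bar> * om m ^ 4) \<Longrightarrow> summable (\<lambda>m. b m * sin (om m * x))"
  by (rule summable_comparison_test'[where g="\<lambda>m. \<bar>b m\<bar> * om m ^ 4"]) (use term_bound0 in auto)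
lemma summ1: "summable (\<lambda>m. \<bar>b m\<bar> * om m ^ 4) \<Longrightarrow> summable (\<lambda>m. b m * om m * cos (om m * x))"
  by (rule summable_comparison_test'[where g="\<lambda>m. \<bar>b m\<bar> * om m ^ 4"]) (use term_bound1 in auto)
lemma summ2: "summable (\<lambda>m. \<bar>b m\<bar> * om m ^ 4) \<Longrightarrow> summable (\<lambda>m. - (b m * om m ^ 2 * sin (om m * x)))"
  by (rule summable_comparison_test'[where g="\<lambda>m. \<bar>b m\<bar> * om m ^ 4"]) (use term_bound2 in auto)

lemma Sf_deriv:
  assumes s: "summable (\<lambda>m. \<bar>b m\<bar> * om m ^ 4)"
  shows "(Sf b has_field_derivative Sf1 b x) (at x)"
proof -
  have "((\<lambda>x. \<Sum>n. b n * sin (om n * x)) has_field_derivative (\<Sum>n. b n * om n * cos (om n * x))) (at x)"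
  proof (rule has_field_derivative_series'(2)[where S=UNIV and f="\<lambda>n x. b n * sin (om n * x)" and f'="\<lambda>n x. b n * om n * cos (om n * x)"])
    show "uniformly_convergent_on UNIV (\<lambda>n x. \<Sum>i<n. b i * om i * cos (om i * x))"
      by (rule Weierstrass_m_test'[OF _ s]) (use term_bound1 in auto)
    show "((\<lambda>x. b n * sin (om n * x)) has_field_derivative b n * om n * cos (om n * x)) (at x within UNIV)" for n x
      by (auto intro!: derivative_eq_intros)
    show "summable (\<lambda>n. b n * sin (om n * 0))" by simp
  qed auto
  then show ?thesis unfolding Sf_def Sf1_def by (simp add: fun_eq_iff)
qed

lemma Sf1_deriv:
  assumes s: "summable (\<lambda>m. \<bar>b m\<bar> * om m ^ 4)"
  shows "(Sf1 b has_field_derivative Sf2 b x) (at x)"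
proof -
  have "((\<lambda>x. \<Sum>n. b n * om n * cos (om n * x)) has_field_derivative (\<Sum>n. - (b n * om n ^ 2 * sin (om n * x)))) (at x)"
  proof (rule has_field_derivative_series'(2)[where S=UNIV and f="\<lambda>n x. b n * om n * cos (om n * x)" and f'="\<lambda>n x. - (b n * om n ^ 2 * sin (om n * x))"])
    show "uniformly_convergent_on UNIV (\<lambda>n x. \<Sum>i<n. - (b i * om i ^ 2 * sin (om i * x)))"
      by (rule Weierstrass_m_test'[OF _ s]) (use term_bound2 in auto)
    show "((\<lambda>x. b n * om n * cos (om n * x)) has_field_derivative - (b n * om n ^ 2 * sin (om n * x))) (at x within UNIV)" for n x
      by (auto intro!: derivative_eq_intros simp: power2_eq_square)
    show "summable (\<lambda>n. b n * om n * cos (om n * 0))" using summ1[OF s, of 0] by simp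
  qed auto
  then show ?thesis unfolding Sf2_def Sf1_def by (simp add: fun_eq_iff)
qed

lemma Sf_cont: "summable (\<lambda>m. \<bar>b m\<bar> * om m ^ 4) \<Longrightarrow> continuous_on A (Sf b)"
  using Sf_deriv DERIV_isCont continuous_at_imp_continuous_on by blast

lemma om_sin1: "sin (om m) = 0" "sin (om m * 0) = 0"
  unfolding om_def by (rule sin_npi) simp

lemma Sf_0: "Sf b 0 = 0" by (simp add: Sf_def)
lemma Sf_1: "Sf b 1 = 0" by (simp add: Sf_def om_sin1)
lemma Sf2_0: "Sf2 b 0 = 0" by (simp add: Sf2_def)
lemma Sf2_1: "Sf2 b 1 = 0" by (simp add: Sf2_def om_sin1)




lemma cosint: "((\<lambda>x. cos (of_int j * pi * x)) has_integral (if j = 0 then 1 else 0)) {0..1::real}"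
proof (cases "j = 0")
  case True
  then show ?thesis using has_integral_const_real[of "1::real" 0 1] by simp
next
  case False
  define r where "r = (of_int j :: real) * pi"
  have r0: "r \<noteq> 0" using False by (simp add: r_def)
  have "((\<lambda>x. cos (r * x)) has_integral ((\<lambda>x. sin (r * x) / r) 1 - (\<lambda>x. sin (r * x) / r) 0)) {0..1}"
  proof (rule fundamental_theorem_of_calculus)
    fix x :: real
    show "((\<lambda>x. sin (r * x) / r) has_vector_derivative cos (r * x)) (at x within {0..1})"
      unfolding has_real_derivative_iff_has_vector_derivative[symmetric]
      using r0 by (auto intro!: derivative_eq_intros)
  qed simp
  moreover have "sin r = 0" unfolding r_def sin_zero_iff_int2 by blast
  ultimately show ?thesis using False by (simp add: r_def)
qed

lemma orth:
  "((\<lambda>x. sin (om i * x) * sin (om n * x)) has_integral (if i = n then 1/2 else 0)) {0..1}"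
proof -
  have eq: "sin (om i * x) * sin (om n * x) =
     cos (of_int (int i - int n) * pi * x) / 2 - cos (of_int (int i + int n + 2) * pi * x) / 2" for x
    by (simp add: sin_times_sin om_def algebra_simps diff_divide_distrib)
  have "((\<lambda>x. cos (of_int (int i - int n) * pi * x) / 2 - cos (of_int (int i + int n + 2) * pi * x) / 2)
     has_integral ((if int i - int n = 0 then 1 else 0) / 2 - (if int i + int n + 2 = 0 then 1 else 0) / 2)) {0..1}"
    by (intro has_integral_diff has_integral_divide cosint)
  then show ?thesis unfolding eq by (simp split: if_splits)
qed

lemma Sf_coeff:
  assumes s: "summable (\<lambda>m. \<bar>b m\<bar> * om m ^ 4)"
  shows "((\<lambda>x. Sf b x * sin (om n * x)) has_integral (b n / 2)) {0..1}"
proof -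
  let ?f = "\<lambda>k x. \<Sum>i<k. b i * sin (om i * x) * sin (om n * x)"
  have u: "uniform_limit {0..1} ?f (\<lambda>x. \<Sum>i. b i * sin (om i * x) * sin (om n * x)) sequentially"
  proof (rule Weierstrass_m_test[OF _ s])
    fix i x
    have "\<bar>b i * sin (om i * x) * sin (om n * x)\<bar> \<le> \<bar>b i * sin (om i * x)\<bar> * 1"
      by (simp add: abs_mult mult_left_le)
    then show "norm (b i * sin (om i * x) * sin (om n * x)) \<le> \<bar>b i\<bar> * om i ^ 4"
      using term_bound0[of b i x] by simp
  qed
  have lim_eq: "(\<Sum>i. b i * sin (om i * x) * sin (om n * x)) = Sf b x * sin (om n * x)" for x
    unfolding Sf_def using summ0[OF s, of x] by (simp add: suminf_mult2)
  have c: "continuous_on {0..1} (?f k)" for k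
    by (intro continuous_intros)
  obtain I J where I: "\<And>k. (?f k has_integral I k) {0..1}"
    and J: "((\<lambda>x. \<Sum>i. b i * sin (om i * x) * sin (om n * x)) has_integral J) {0..1}"
    and IJ: "I \<longlonglongrightarrow> J"
    using uniform_limit_integral[OF u c] by auto
  have Ik: "I k = (if n < k then b n / 2 else 0)" for k
  proof -
    have "(?f k has_integral (\<Sum>i<k. b i * (if i = n then 1/2 else 0))) {0..1}"
      unfolding mult.assoc by (intro has_integral_sum has_integral_mult_right orth) auto
    moreover have "(\<Sum>i<k. b i * (if i = n then 1/2 else (0::real))) = (\<Sum>i<k. if i = n then b n / 2 else 0)"
      by (intro sum.cong) auto
    moreover have "(\<Sum>i<k. if i = n then b n / 2 else (0::real)) = (if n < k then b n / 2 else 0)"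
      by (subst sum.delta) auto
    ultimately show ?thesis using I[of k] has_integral_unique by (metis (no_types, lifting))
  qed
  have "I \<longlonglongrightarrow> b n / 2"
  proof -
    have "eventually (\<lambda>k. I k = b n / 2) sequentially"
      using eventually_gt_at_top[of n] by eventually_elim (simp add: Ik)
    then show ?thesis by (rule tendsto_eventually)
  qed
  then have "J = b n / 2" using IJ LIMSEQ_unique by blast
  with J show ?thesis unfolding lim_eq by simp
qed




lemma complete_step:
  assumes hc: "continuous_on {0..1} h"
    and orth: "\<And>n. ((\<lambda>x. h x * sin (real (Suc n) * pi * x)) has_integral 0) {0..1::real}"
  shows "((\<lambda>x. h x * sin (real k * pi * x) * cos (pi * x) ^ j) has_integral 0) {0..1}"
proof (induction j arbitrary: k)
  case 0
  show ?case
  proof (cases k)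
    case 0 then show ?thesis by simp
  next
    case (Suc n) then show ?thesis using orth[of n] by simp
  qed
next
  case (Suc j)
  show ?case
  proof (cases k)
    case 0 then show ?thesis by simp
  next
    case (Suc m)
    have eq: "h x * sin (real k * pi * x) * cos (pi * x) ^ Suc j =
       (1/2) * (h x * sin (real (Suc (Suc m)) * pi * x) * cos (pi * x) ^ j) +
       (1/2) * (h x * sin (real m * pi * x) * cos (pi * x) ^ j)" for x
    proof -
      have sc: "sin (real k * pi * x) * cos (pi * x) =
          (sin (real (Suc (Suc m)) * pi * x) + sin (real m * pi * x)) / 2"
        unfolding sin_times_cos Suc by (simp add: algebra_simps)
      have "h x * sin (real k * pi * x) * cos (pi * x) ^ Suc j =
          h x * cos (pi * x) ^ j * (sin (real k * pi * x) * cos (pi * x))"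
        by (simp add: algebra_simps)
      also have "\<dots> = h x * cos (pi * x) ^ j * ((sin (real (Suc (Suc m)) * pi * x) + sin (real m * pi * x)) / 2)"
        by (simp only: sc)
      finally show ?thesis by (simp add: algebra_simps)
    qed
    have "((\<lambda>x. (1/2) * (h x * sin (real (Suc (Suc m)) * pi * x) * cos (pi * x) ^ j) +
       (1/2) * (h x * sin (real m * pi * x) * cos (pi * x) ^ j)) has_integral (1/2 * 0 + 1/2 * 0)) {0..1}"
      by (intro has_integral_add has_integral_mult_right Suc.IH)
    then show ?thesis unfolding eq by simp
  qed
qed

lemma complete_poly:
  assumes hc: "continuous_on {0..1} h"
    and orth: "\<And>n. ((\<lambda>x. h x * sin (real (Suc n) * pi * x)) has_integral 0) {0..1::real}"
  shows "((\<lambda>x. h x * sin (pi * x) * (\<Sum>i\<le>d. a i * cos (pi * x) ^ i)) has_integral 0) {0..1}"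
proof -
  have "((\<lambda>x. \<Sum>i\<le>d. a i * (h x * sin (real 1 * pi * x) * cos (pi * x) ^ i)) has_integral (\<Sum>i\<le>d. a i * 0)) {0..1}"
    by (intro has_integral_sum has_integral_mult_right complete_step[OF hc orth]) auto
  moreover have "(\<Sum>i\<le>d. a i * (h x * sin (real 1 * pi * x) * cos (pi * x) ^ i)) =
     h x * sin (pi * x) * (\<Sum>i\<le>d. a i * cos (pi * x) ^ i)" for x
    by (simp add: sum_distrib_left algebra_simps)
  ultimately show ?thesis by simp
qed

lemma completeness:
  assumes hc: "continuous_on {0..1} h"
    and orth: "\<And>n. ((\<lambda>x. h x * sin (real (Suc n) * pi * x)) has_integral 0) {0..1::real}"
    and x: "x \<in> {0..1}"
  shows "h x = 0"
proof -
  define F where "F x = h x ^ 2 * sin (pi * x)" for x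
  have Fc: "continuous_on {0..1} F" unfolding F_def by (intro continuous_intros hc)
  obtain I where I: "(F has_integral I) {0..1}"
    using integrable_continuous_interval[OF Fc] by blast
  obtain Mh where Mh: "Mh > 0" "\<And>x. x \<in> {0..1} \<Longrightarrow> \<bar>h x\<bar> \<le> Mh"
  proof -
    have "bounded (h ` {0..1})" by (intro compact_imp_bounded compact_continuous_image hc) auto
    then show ?thesis using that unfolding bounded_pos by auto
  qed
  define f where "f t = h (arccos t / pi)" for t
  have fc: "continuous_on {-1..1} f"
    unfolding f_def
  proof (rule continuous_on_compose2[OF hc])
    show "continuous_on {-1..1} (\<lambda>t. arccos t / pi)"
      by (intro continuous_intros continuous_on_arccos') auto
    show "(\<lambda>t. arccos t / pi) ` {-1..1} \<subseteq> {0..1}"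
      using arccos_lbound arccos_ubound by (auto simp: field_simps)
  qed
  have bnd: "\<bar>I\<bar> \<le> Mh * e" if e: "e > 0" for e
  proof -
    obtain g where g: "real_polynomial_function g" "\<And>t. t \<in> {-1..1} \<Longrightarrow> \<bar>f t - g t\<bar> < e"
      using Stone_Weierstrass_real_polynomial_function[OF compact_Icc fc e] by blast
    obtain a d where gd: "g = (\<lambda>t. \<Sum>i\<le>d. a i * t^i)"
      using g(1) real_polynomial_function_iff_sum by blast
    have close: "\<bar>h x - g (cos (pi * x))\<bar> < e" if "x \<in> {0..1}" for x
    proof -
      have "cos (pi * x) \<in> {-1..1}" by auto
      moreover have "arccos (cos (pi * x)) = pi * x"
        using that by (intro arccos_cos) auto
      ultimately show ?thesis using g(2)[of "cos (pi * x)"] by (simp add: f_def)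
    qed
    have P: "((\<lambda>x. h x * sin (pi * x) * g (cos (pi * x))) has_integral 0) {0..1}"
      unfolding gd using complete_poly[OF hc orth] by simp
    have D: "((\<lambda>x. F x - h x * sin (pi * x) * g (cos (pi * x))) has_integral (I - 0)) {0..1}"
      by (intro has_integral_diff I P)
    have "norm (I - 0) \<le> (Mh * e) * Henstock_Kurzweil_Integration.content {0..1::real}"
    proof (rule has_integral_bound_real[OF _ _ D, where S="{}"])
      show "0 \<le> Mh * e" using Mh e by simp
      fix x assume "x \<in> {0..1::real} - {}"
      then have x01: "x \<in> {0..1}" by simp
      have "F x - h x * sin (pi * x) * g (cos (pi * x)) = h x * sin (pi * x) * (h x - g (cos (pi * x)))"
        by (simp add: F_def power2_eq_square algebra_simps)
      also have "\<bar>\<dots>\<bar> \<le> Mh * 1 * e"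
        unfolding abs_mult
        using close[OF x01] Mh(2)[OF x01] Mh(1)
        by (intro mult_mono) (auto simp: abs_sin_le_one)
      finally show "norm (F x - h x * sin (pi * x) * g (cos (pi * x))) \<le> Mh * e" by simp
    qed auto
    then show ?thesis by simp
  qed
  have I0: "I = 0"
  proof -
    have "\<bar>I\<bar> \<le> 0 + e" if "e > 0" for e
      using bnd[of "e / Mh"] that Mh(1) by simp
    then have "\<bar>I\<bar> \<le> 0" by (rule field_le_epsilon)
    then show ?thesis by simp
  qed
  have Fz: "F y = 0" if "y \<in> {0..1}" for y
  proof (rule has_integral_0_cbox_imp_0[of 0 1 F])
    show "continuous_on (cbox 0 1) F" using Fc by simp
    show "0 \<le> F x" if "x \<in> box 0 1" for x
      using that unfolding F_def by (auto intro!: mult_nonneg_nonneg sin_ge_zero)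
    show "(F has_integral 0) (cbox 0 1)" using I I0 by simp
  qed (use that in auto)
  have hz: "h y = 0" if "y \<in> {0<..<1}" for y
  proof -
    have "sin (pi * y) > 0" using that by (intro sin_gt_zero) auto
    then show ?thesis using Fz[of y] that by (simp add: F_def)
  qed
  show ?thesis
    by (rule continuous_constant_on_closure[of "{0<..<1}" h]) (use hc hz x in auto)
qed




lemma G_eq_Sf:
  assumes a: "\<alpha> > 0" and S: "in_S \<alpha> G" and x: "x \<in> {0..1}"
  shows "G x = Sf (bc G) x"
proof -
  have s: "summable (\<lambda>m. \<bar>bc G m\<bar> * om m ^ 4)" by (rule coeff_decay[OF a S])
  have Gc: "continuous_on {0..1} G" using S by (simp add: in_S_def)
  have hc: "continuous_on {0..1} (\<lambda>x. G x - Sf (bc G) x)"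
    by (intro continuous_intros Gc Sf_cont[OF s])
  have orth: "((\<lambda>x. (G x - Sf (bc G) x) * sin (real (Suc n) * pi * x)) has_integral 0) {0..1::real}" for n
  proof -
    define J where "J = integral {0..1} (\<lambda>x. G x * sin (om n * x))"
    have Jh: "((\<lambda>x. G x * sin (om n * x)) has_integral J) {0..1}"
      unfolding J_def by (intro integrable_integral integrable_continuous_interval continuous_intros Gc)
    have "((\<lambda>x. sqrt 2 * (G x * sin (om n * x))) has_integral sqrt 2 * J) {0..1}"
      by (intro has_integral_mult_right Jh)
    moreover have "(\<lambda>x. sqrt 2 * (G x * sin (om n * x))) = (\<lambda>x. G x * dir_psi (Suc n) x)"
      by (simp add: dir_psi_def om_def fun_eq_iff algebra_simps)
    ultimately have "cf G n = sqrt 2 * J" unfolding cf_def by (simp add: integral_unique)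
    then have bJ: "bc G n / 2 = J" by (simp add: bc_def)
    have "((\<lambda>x. G x * sin (om n * x) - Sf (bc G) x * sin (om n * x)) has_integral (J - bc G n / 2)) {0..1}"
      by (intro has_integral_diff Jh Sf_coeff[OF s])
    then show ?thesis using bJ by (simp add: om_def algebra_simps)
  qed
  have "G x - Sf (bc G) x = 0"
    by (rule completeness[OF hc orth x])
  then show ?thesis by simp
qed

lemma d01_G:
  assumes a: "\<alpha> > 0" and S: "in_S \<alpha> G" and x: "x \<in> {0..1}"
  shows "d01 G x = Sf1 (bc G) x"
proof -
  have s: "summable (\<lambda>m. \<bar>bc G m\<bar> * om m ^ 4)" by (rule coeff_decay[OF a S])
  have "(Sf (bc G) has_vector_derivative Sf1 (bc G) x) (at x within {0..1})"
    using Sf_deriv[OF s, of x]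
    unfolding has_real_derivative_iff_has_vector_derivative by (rule has_vector_derivative_at_within)
  then have "(G has_vector_derivative Sf1 (bc G) x) (at x within {0..1})"
    using has_vector_derivative_transform[where S="{0..1}" and g=G and f="Sf (bc G)" and x=x] G_eq_Sf[OF a S] x by blast
  then show ?thesis unfolding d01_def
    by (rule vector_derivative_within_closed_interval[rotated 2]) (use x in auto)
qed

lemma d2_G:
  assumes a: "\<alpha> > 0" and S: "in_S \<alpha> G" and x: "x \<in> {0..1}"
  shows "d2_01 G x = Sf2 (bc G) x"
proof -
  have s: "summable (\<lambda>m. \<bar>bc G m\<bar> * om m ^ 4)" by (rule coeff_decay[OF a S])
  have "(Sf1 (bc G) has_vector_derivative Sf2 (bc G) x) (at x within {0..1})"
    using Sf1_deriv[OF s, of x]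
    unfolding has_real_derivative_iff_has_vector_derivative by (rule has_vector_derivative_at_within)
  then have "(d01 G has_vector_derivative Sf2 (bc G) x) (at x within {0..1})"
    using has_vector_derivative_transform[where S="{0..1}" and g="d01 G" and f="Sf1 (bc G)" and x=x] d01_G[OF a S] x by blast
  then show ?thesis unfolding d2_01_def d01_def[of "d01 G"]
    by (rule vector_derivative_within_closed_interval[rotated 2]) (use x in auto)
qed




lemma sin_y_bound: "\<bar>sin y - y\<bar> \<le> \<bar>y\<bar> ^ 3 / (6::real)"
proof -
  have "\<bar>sin y - (\<Sum>m<3. sin_coeff m * y ^ m)\<bar> \<le> inverse (fact 3) * \<bar>y\<bar> ^ 3"
    by (rule Maclaurin_sin_bound)
  moreover have "(\<Sum>m<3. sin_coeff m * y ^ m) = y"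
    by (simp add: sin_coeff_def eval_nat_numeral lessThan_Suc)
  moreover have "inverse (fact 3 :: real) = 1 / 6" by (simp add: eval_nat_numeral)
  ultimately show ?thesis by simp
qed

lemma cos_quart: "\<bar>2 * cos t - 2 + t^2\<bar> \<le> t^4 / (12::real)"
proof -
  define y where "y = t / 2"
  have t: "t = 2 * y" by (simp add: y_def)
  have "2 * cos t - 2 + t^2 = 4 * ((y - sin y) * (y + sin y))"
    unfolding t cos_double_sin by (simp add: power2_eq_square algebra_simps)
  also have "\<bar>\<dots>\<bar> \<le> 4 * ((\<bar>y\<bar> ^ 3 / 6) * (2 * \<bar>y\<bar>))"
    unfolding abs_mult
  proof (intro mult_left_mono mult_mono)
    show "\<bar>y - sin y\<bar> \<le> \<bar>y\<bar> ^ 3 / 6" using sin_y_bound[of y] by (simp add: abs_minus_commute)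
    show "\<bar>y + sin y\<bar> \<le> 2 * \<bar>y\<bar>" using abs_sin_x_le_abs_x[of y] by linarith
  qed auto
  also have "\<dots> = t^4 / 12" unfolding t by (simp add: power_mult_distrib abs_mult eval_nat_numeral power_abs[symmetric])
  finally show ?thesis .
qed

lemma sd_term:
  fixes w x h :: real
  shows "\<bar>sin (w * (x + h)) + sin (w * (x - h)) - 2 * sin (w * x) + h^2 * w^2 * sin (w * x)\<bar> \<le> w^4 * h^4 / 12"
proof -
  have "sin (w * (x + h)) + sin (w * (x - h)) - 2 * sin (w * x) + h^2 * w^2 * sin (w * x) =
      sin (w * x) * (2 * cos (w * h) - 2 + (w * h)^2)"
    by (simp add: distrib_left right_diff_distrib sin_add sin_diff power_mult_distrib algebra_simps)
  also have "\<bar>\<dots>\<bar> \<le> 1 * ((w * h)^4 / 12)"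
    unfolding abs_mult by (intro mult_mono cos_quart) (auto simp: abs_sin_le_one)
  finally show ?thesis by (simp add: power_mult_distrib)
qed

lemma abs_suminf_le:
  fixes T B :: "nat \<Rightarrow> real"
  assumes "T sums L" "summable B" "\<And>m. \<bar>T m\<bar> \<le> B m"
  shows "\<bar>L\<bar> \<le> suminf B"
proof -
  have sa: "summable (\<lambda>m. \<bar>T m\<bar>)"
    by (rule summable_comparison_test'[OF assms(2)]) (use assms(3) in auto)
  have "L = suminf T" using assms(1) sums_unique by blast
  also have "\<bar>suminf T\<bar> \<le> (\<Sum>m. \<bar>T m\<bar>)" by (rule summable_rabs[OF sa])
  also have "\<dots> \<le> suminf B" by (rule suminf_le[OF assms(3) sa assms(2)])
  finally show ?thesis .
qed

definition Cb :: "(nat \<Rightarrow> real) \<Rightarrow> real" where "Cb b = (\<Sum>m. \<bar>b m\<bar> * om m ^ 4)"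

lemma second_diff:
  assumes s: "summable (\<lambda>m. \<bar>b m\<bar> * om m ^ 4)"
  shows "\<bar>Sf b (x + h) + Sf b (x - h) - 2 * Sf b x - h^2 * Sf2 b x\<bar> \<le> h^4 / 12 * Cb b"
proof -
  have "(\<lambda>m. b m * sin (om m * (x + h)) + b m * sin (om m * (x - h)) - 2 * (b m * sin (om m * x))
          - h^2 * (- (b m * om m ^ 2 * sin (om m * x))))
      sums (Sf b (x + h) + Sf b (x - h) - 2 * Sf b x - h^2 * Sf2 b x)"
    unfolding Sf_def Sf2_def
    by (intro sums_add sums_diff sums_mult summable_sums summ0[OF s] summ2[OF s])
  moreover have "summable (\<lambda>m. h^4 / 12 * (\<bar>b m\<bar> * om m ^ 4))" by (intro summable_mult s)
  moreover have "\<bar>b m * sin (om m * (x + h)) + b m * sin (om m * (x - h)) - 2 * (b m * sin (om m * x))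
          - h^2 * (- (b m * om m ^ 2 * sin (om m * x)))\<bar> \<le> h^4 / 12 * (\<bar>b m\<bar> * om m ^ 4)" for m
  proof -
    have "b m * sin (om m * (x + h)) + b m * sin (om m * (x - h)) - 2 * (b m * sin (om m * x))
          - h^2 * (- (b m * om m ^ 2 * sin (om m * x))) =
        b m * (sin (om m * (x + h)) + sin (om m * (x - h)) - 2 * sin (om m * x) + h^2 * om m^2 * sin (om m * x))"
      by (simp add: algebra_simps)
    also have "\<bar>\<dots>\<bar> \<le> \<bar>b m\<bar> * (om m ^ 4 * h ^ 4 / 12)"
      unfolding abs_mult by (intro mult_left_mono sd_term) auto
    finally show ?thesis by (simp add: algebra_simps)
  qed
  ultimately have "\<bar>Sf b (x + h) + Sf b (x - h) - 2 * Sf b x - h^2 * Sf2 b x\<bar> \<le> (\<Sum>m. h^4 / 12 * (\<bar>b m\<bar> * om m ^ 4))"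
    by (rule abs_suminf_le)
  also have "\<dots> = h^4 / 12 * Cb b" unfolding Cb_def by (rule suminf_mult[OF s])
  finally show ?thesis .
qed

lemma Sf_small:
  assumes s: "summable (\<lambda>m. \<bar>b m\<bar> * om m ^ 4)"
  shows "\<bar>Sf b t\<bar> \<le> \<bar>t\<bar> * Cb b" "\<bar>Sf b (1 - t)\<bar> \<le> \<bar>t\<bar> * Cb b"
proof -
  have key: "\<bar>sin (om m * t)\<bar> \<le> \<bar>t\<bar> * om m ^ 4" for m
  proof -
    have o: "om m \<ge> 0" using om_ge1[of m] by linarith
    have "\<bar>sin (om m * t)\<bar> \<le> \<bar>om m * t\<bar>" by (rule abs_sin_x_le_abs_x)
    also have "\<dots> = \<bar>t\<bar> * om m ^ 1" using o by (simp add: abs_mult)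
    also have "\<dots> \<le> \<bar>t\<bar> * om m ^ 4" using om_pow_mono[of 1 m] by (intro mult_left_mono) auto
    finally show ?thesis .
  qed
  have key2: "\<bar>sin (om m * (1 - t))\<bar> \<le> \<bar>t\<bar> * om m ^ 4" for m
  proof -
    have e: "sin (om m * (1 - t)) = - cos (om m) * sin (om m * t)"
      using om_sin1(1)[of m] by (simp add: right_diff_distrib sin_diff)
    have "\<bar>sin (om m * (1 - t))\<bar> = \<bar>cos (om m)\<bar> * \<bar>sin (om m * t)\<bar>"
      unfolding e by (simp add: abs_mult)
    also have "\<dots> \<le> 1 * \<bar>sin (om m * t)\<bar>"
      by (intro mult_right_mono) (auto simp: abs_cos_le_one)
    finally have "\<bar>sin (om m * (1 - t))\<bar> \<le> 1 * \<bar>sin (om m * t)\<bar>" .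
    then show ?thesis using key[of m] by simp
  qed
  have sb: "summable (\<lambda>m. \<bar>t\<bar> * (\<bar>b m\<bar> * om m ^ 4))" by (intro summable_mult s)
  have "\<bar>Sf b t\<bar> \<le> (\<Sum>m. \<bar>t\<bar> * (\<bar>b m\<bar> * om m ^ 4))"
    unfolding Sf_def
  proof (rule abs_suminf_le[OF summable_sums[OF summ0[OF s]] sb])
    fix m show "\<bar>b m * sin (om m * t)\<bar> \<le> \<bar>t\<bar> * (\<bar>b m\<bar> * om m ^ 4)"
      using key[of m] by (simp add: abs_mult mult_left_mono algebra_simps)
         (metis abs_ge_zero mult.left_commute mult_left_mono)
  qed
  then show "\<bar>Sf b t\<bar> \<le> \<bar>t\<bar> * Cb b" unfolding Cb_def suminf_mult[OF s] .
  have "\<bar>Sf b (1 - t)\<bar> \<le> (\<Sum>m. \<bar>t\<bar> * (\<bar>b m\<bar> * om m ^ 4))"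
    unfolding Sf_def
  proof (rule abs_suminf_le[OF summable_sums[OF summ0[OF s]] sb])
    fix m show "\<bar>b m * sin (om m * (1 - t))\<bar> \<le> \<bar>t\<bar> * (\<bar>b m\<bar> * om m ^ 4)"
      using key2[of m] by (simp add: abs_mult mult_left_mono algebra_simps)
         (metis abs_ge_zero mult.left_commute mult_left_mono)
  qed
  then show "\<bar>Sf b (1 - t)\<bar> \<le> \<bar>t\<bar> * Cb b" unfolding Cb_def suminf_mult[OF s] .
qed

lemma Cb_nonneg: "summable (\<lambda>m. \<bar>b m\<bar> * om m ^ 4) \<Longrightarrow> Cb b \<ge> 0"
  unfolding Cb_def using om_ge1 by (intro suminf_nonneg) auto




lemma genA_mid:
  assumes "2 \<le> x" "x + 2 \<le> N"
  shows "genA \<alpha> \<alpha>L \<alpha>R \<beta> N F x = (real N)^2 * (\<alpha> * (F (real (x+1) / real N) - F (real x / real N))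
     + \<alpha> * (F (real (x-1) / real N) - F (real x / real N)))"
proof -
  have set: "{y. 1 \<le> y \<and> y \<le> N - 1 \<and> (y = x + 1 \<or> x = y + 1)} = {x+1, x-1}"
    using assms by auto
  have ne: "x + 1 \<noteq> x - 1" "x \<noteq> 1" "x \<noteq> N - 1" "1 \<le> x" "x \<le> N - 1" using assms by auto
  have r: "real (x - 1) = real x - 1" using assms by auto
  show ?thesis unfolding genA_def set using ne by (simp add: algebra_simps r)
qed

lemma genA_left:
  assumes "3 \<le> N"
  shows "genA \<alpha> \<alpha>L \<alpha>R \<beta> N F 1 = (real N)^2 * (\<alpha> * (F (2 / real N) - F (1 / real N)))
     + real N powr (2 - \<beta>) * \<alpha>L * (F 0 - F (1 / real N))"
proof -
  have set: "{y. 1 \<le> y \<and> y \<le> N - 1 \<and> (y = 1 + 1 \<or> 1 = y + 1)} = {2}"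
    using assms by auto
  have "(1::nat) \<noteq> N - 1" using assms by auto
  then show ?thesis using assms unfolding genA_def set by simp
qed

lemma genA_right:
  assumes "3 \<le> N"
  shows "genA \<alpha> \<alpha>L \<alpha>R \<beta> N F (N - 1) = (real N)^2 * (\<alpha> * (F (real (N - 2) / real N) - F (real (N - 1) / real N)))
     + real N powr (2 - \<beta>) * \<alpha>R * (F 1 - F (real (N - 1) / real N))"
proof -
  have set: "{y. 1 \<le> y \<and> y \<le> N - 1 \<and> (y = (N - 1) + 1 \<or> N - 1 = y + 1)} = {N - 2}"
    using assms by auto
  have "N - 1 \<noteq> (1::nat)" using assms by auto
  then show ?thesis using assms unfolding genA_def set by simp
qed

lemma genA_out:
  assumes "x = 0 \<or> N \<le> x"
  shows "genA \<alpha> \<alpha>L \<alpha>R \<beta> N F x = 0"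
  using assms unfolding genA_def by auto




context
  fixes \<alpha> \<alpha>L \<alpha>R \<beta> :: real and G :: "real \<Rightarrow> real"
  assumes a: "\<alpha> > 0" and aL: "\<alpha>L > 0" and aR: "\<alpha>R > 0" and b0: "0 \<le> \<beta>" and b1: "\<beta> < 1"
    and GS: "in_S \<alpha> G"
begin

definition "SS = Sf (bc G)"
definition "aLN N = \<alpha> / \<alpha>L * real N powr \<beta> - 1"
definition "aRN N = \<alpha> / \<alpha>R * real N powr \<beta> - 1"
definition "g1 N = SS (1 / real N)"
definition "gr N = SS (real (N - 1) / real N)"
definition "dd N = (aRN N * gr N - aLN N * g1 N) / (real N + aLN N + aRN N)"
definition "pp N = aLN N * (g1 N + dd N)"
definition "qq N = aRN N * (gr N - dd N)"
definition "GN N y = (if y = 0 \<or> y = 1 then 0 else SS y + pp N + (qq N - pp N) * y)"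

lemma sG: "summable (\<lambda>m. \<bar>bc G m\<bar> * om m ^ 4)" by (rule coeff_decay[OF a GS])

lemma SS0: "SS 0 = 0" and SS1: "SS 1 = 0" unfolding SS_def by (rule Sf_0, rule Sf_1)

lemma aLN_gt: "N \<ge> 1 \<Longrightarrow> aLN N > -1"
  unfolding aLN_def using a aL by (simp add: powr_gt_zero)
lemma aRN_gt: "N \<ge> 1 \<Longrightarrow> aRN N > -1"
  unfolding aRN_def using a aR by (simp add: powr_gt_zero)

lemma den_pos: "N \<ge> 3 \<Longrightarrow> real N + aLN N + aRN N \<ge> real N / 3"
  using aLN_gt[of N] aRN_gt[of N] by auto

lemma qp: "N \<ge> 3 \<Longrightarrow> qq N - pp N = dd N * real N"
proof -
  assume N: "N \<ge> 3"
  have D: "real N + aLN N + aRN N > 0" using den_pos[OF N] N by linarith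
  have "dd N * (real N + aLN N + aRN N) = aRN N * gr N - aLN N * g1 N"
    unfolding dd_def using D by simp
  then show ?thesis unfolding pp_def qq_def by (simp add: algebra_simps)
qed

lemma powr_combine: "N \<ge> 1 \<Longrightarrow> real N powr (2 - \<beta>) * real N powr \<beta> = (real N)^2"
proof -
  assume "N \<ge> 1"
  then have "real N > 0" by simp
  then have "real N powr (2 - \<beta>) * real N powr \<beta> = real N powr 2" by (simp add: powr_add[symmetric])
  also have "\<dots> = (real N)^2" using \<open>real N > 0\<close> by (simp add: powr_realpow)
  finally show ?thesis .
qed

lemma GN_int: "N \<ge> 1 \<Longrightarrow> 0 < y \<Longrightarrow> y < 1 \<Longrightarrow> GN N y = SS y + pp N + (qq N - pp N) * y"
  unfolding GN_def by auto

lemma genA_GN: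
  assumes N: "N \<ge> 3" and x: "1 \<le> x" "x \<le> N - 1"
  shows "genA \<alpha> \<alpha>L \<alpha>R \<beta> N (GN N) x =
     \<alpha> * (real N)^2 * (SS (real x / real N + 1 / real N) + SS (real x / real N - 1 / real N) - 2 * SS (real x / real N))"
proof -
  define n where "n = real N"
  have n3: "n \<ge> 3" using N by (simp add: n_def)
  have n0: "n > 0" using n3 by simp
  have qpn: "qq N - pp N = dd N * n" using qp[OF N] by (simp add: n_def)
  have GNk: "GN N (real k / n) = SS (real k / n) + pp N + dd N * real k" if "1 \<le> k" "k \<le> N - 1" for k
  proof -
    have "real k / n > 0" using that n0 by simp
    moreover have "real k / n < 1" using that n0 N by (simp add: n_def divide_less_eq)
    ultimately have "GN N (real k / n) = SS (real k / n) + pp N + (qq N - pp N) * (real k / n)"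
      using GN_int N by simp
    also have "(qq N - pp N) * (real k / n) = dd N * real k" using qpn n0 by simp
    finally show ?thesis .
  qed
  have GN0: "GN N 0 = 0" and GN1: "GN N 1 = 0" unfolding GN_def by auto
  have pwL: "n powr (2 - \<beta>) * \<alpha>L * (\<alpha> / \<alpha>L * n powr \<beta> * B) = \<alpha> * n^2 * B" for B
  proof -
    have "n powr (2 - \<beta>) * \<alpha>L * (\<alpha> / \<alpha>L * n powr \<beta> * B) = (\<alpha>L * (\<alpha> / \<alpha>L)) * (n powr (2 - \<beta>) * n powr \<beta>) * B"
      by (simp only: mult_ac)
    also have "\<dots> = \<alpha> * n^2 * B" using aL powr_combine[of N] N by (simp add: n_def)
    finally show ?thesis .
  qed
  have pwR: "n powr (2 - \<beta>) * \<alpha>R * (\<alpha> / \<alpha>R * n powr \<beta> * B) = \<alpha> * n^2 * B" for B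
  proof -
    have "n powr (2 - \<beta>) * \<alpha>R * (\<alpha> / \<alpha>R * n powr \<beta> * B) = (\<alpha>R * (\<alpha> / \<alpha>R)) * (n powr (2 - \<beta>) * n powr \<beta>) * B"
      by (simp only: mult_ac)
    also have "\<dots> = \<alpha> * n^2 * B" using aR powr_combine[of N] N by (simp add: n_def)
    finally show ?thesis .
  qed
  consider "x = 1" | "x = N - 1" | "2 \<le> x \<and> x + 2 \<le> N" using x N by linarith
  then show ?thesis
  proof cases
    case 1
    have e1: "GN N (1 / n) = SS (1 / n) + pp N + dd N" using GNk[of 1] N by simp
    have e2: "GN N (2 / n) = SS (2 / n) + pp N + 2 * dd N" using GNk[of 2] N by simp
    have e3: "SS (1 / n) + pp N + dd N = \<alpha> / \<alpha>L * n powr \<beta> * (SS (1 / n) + dd N)"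
      unfolding pp_def aLN_def g1_def n_def by (simp add: algebra_simps)
    have h1: "GN N (2 / n) - GN N (1 / n) = SS (2 / n) - SS (1 / n) + dd N" using e1 e2 by simp
    have h2: "GN N (1 / n) = \<alpha> / \<alpha>L * n powr \<beta> * (SS (1 / n) + dd N)" using e1 e3 by simp
    have h3: "n powr (2 - \<beta>) * \<alpha>L * (0 - GN N (1 / n)) = - (\<alpha> * n^2 * (SS (1 / n) + dd N))"
      unfolding h2 by (simp only: diff_0 mult_minus_right pwL)
    have "genA \<alpha> \<alpha>L \<alpha>R \<beta> N (GN N) x = n^2 * (\<alpha> * (GN N (2 / n) - GN N (1 / n)))
       + n powr (2 - \<beta>) * \<alpha>L * (GN N 0 - GN N (1 / n))"
      using genA_left[OF N] 1 by (simp add: n_def)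
    also have "\<dots> = n^2 * (\<alpha> * (SS (2 / n) - SS (1 / n) + dd N)) - \<alpha> * n^2 * (SS (1 / n) + dd N)"
      using h3 unfolding h1 GN0 by simp
    also have "\<dots> = \<alpha> * n^2 * (SS (2 / n) + SS 0 - 2 * SS (1 / n))"
      by (simp add: SS0 algebra_simps)
    finally show ?thesis using 1 n0 by (simp add: n_def add_divide_distrib[symmetric])
  next
    case 2
    have rN1: "real (N - 1) = n - 1" "real (N - 2) = n - 2" using N by (auto simp: n_def)
    have e1: "GN N (real (N - 1) / n) = SS (real (N - 1) / n) + pp N + dd N * (n - 1)"
      using GNk[of "N - 1"] N rN1 by simp
    have e2: "GN N (real (N - 2) / n) = SS (real (N - 2) / n) + pp N + dd N * (n - 2)"
      using GNk[of "N - 2"] N rN1 by simp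
    have qq': "pp N + dd N * n = qq N" using qpn by simp
    have e1': "GN N (real (N - 1) / n) = \<alpha> / \<alpha>R * n powr \<beta> * (SS (real (N - 1) / n) - dd N)"
      unfolding e1 using qq' unfolding qq_def aRN_def gr_def n_def by (simp add: algebra_simps)
    have e2': "GN N (real (N - 2) / n) = SS (real (N - 2) / n) + qq N - 2 * dd N"
      unfolding e2 using qq' by (simp add: algebra_simps)
    have e1'': "GN N (real (N - 1) / n) = SS (real (N - 1) / n) + qq N - dd N"
      unfolding e1 using qq' by (simp add: algebra_simps)
    have h1: "GN N (real (N - 2) / n) - GN N (real (N - 1) / n) = SS (real (N - 2) / n) - SS (real (N - 1) / n) - dd N"
      using e2' e1'' by simp
    have h3: "n powr (2 - \<beta>) * \<alpha>R * (0 - GN N (real (N - 1) / n)) = - (\<alpha> * n^2 * (SS (real (N - 1) / n) - dd N))"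
      unfolding e1' by (simp only: diff_0 mult_minus_right pwR)
    have "genA \<alpha> \<alpha>L \<alpha>R \<beta> N (GN N) x = n^2 * (\<alpha> * (GN N (real (N - 2) / n) - GN N (real (N - 1) / n)))
       + n powr (2 - \<beta>) * \<alpha>R * (GN N 1 - GN N (real (N - 1) / n))"
      using genA_right[OF N] 2 by (simp add: n_def)
    also have "\<dots> = n^2 * (\<alpha> * (SS (real (N - 2) / n) - SS (real (N - 1) / n) - dd N)) - \<alpha> * n^2 * (SS (real (N - 1) / n) - dd N)"
      using h3 unfolding h1 GN1 by simp
    also have "\<dots> = \<alpha> * n^2 * (SS 1 + SS (real (N - 2) / n) - 2 * SS (real (N - 1) / n))"
      by (simp add: SS1 algebra_simps)
    finally have fin: "genA \<alpha> \<alpha>L \<alpha>R \<beta> N (GN N) x = \<alpha> * n^2 * (SS 1 + SS (real (N - 2) / n) - 2 * SS (real (N - 1) / n))" .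
    have xN: "x = N - 1" using 2 .
    have ea: "real (N - 1) / n + 1 / n = 1" using rN1 n0 by (simp add: field_simps)
    have eb: "real (N - 1) / n - 1 / n = real (N - 2) / n" using rN1 n0 by (simp add: field_simps)
    show ?thesis unfolding n_def[symmetric] xN ea eb using fin unfolding xN by simp
  next
    case 3
    have r: "real (x + 1) = real x + 1" "real (x - 1) = real x - 1" using 3 by auto
    have "genA \<alpha> \<alpha>L \<alpha>R \<beta> N (GN N) x = n^2 * (\<alpha> * (GN N (real (x+1) / n) - GN N (real x / n))
     + \<alpha> * (GN N (real (x-1) / n) - GN N (real x / n)))"
      using genA_mid[of x N] 3 by (simp add: n_def)
    also have "\<dots> = n^2 * (\<alpha> * (SS (real (x+1) / n) - SS (real x / n) + dd N)
     + \<alpha> * (SS (real (x-1) / n) - SS (real x / n) - dd N))"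
    proof -
      have k1: "GN N (real (x+1) / n) = SS (real (x+1) / n) + pp N + dd N * real (x+1)"
        by (rule GNk) (use 3 in auto)
      have k2: "GN N (real x / n) = SS (real x / n) + pp N + dd N * real x"
        by (rule GNk) (use 3 in auto)
      have k3: "GN N (real (x-1) / n) = SS (real (x-1) / n) + pp N + dd N * real (x-1)"
        by (rule GNk) (use 3 in auto)
      show ?thesis unfolding k1 k2 k3 unfolding r by (simp add: algebra_simps)
    qed
    also have "\<dots> = \<alpha> * n^2 * (SS (real x / n + 1 / n) + SS (real x / n - 1 / n) - 2 * SS (real x / n))"
      using r by (simp add: add_divide_distrib diff_divide_distrib algebra_simps)
    finally show ?thesis by (simp add: n_def)
  qed
qed


definition "CC = Cb (bc G)"
definition "EE N = (\<alpha> / \<alpha>L + \<alpha> / \<alpha>R) * real N powr (\<beta> - 1) + 1 / real N"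

lemma CC_nonneg: "CC \<ge> 0" unfolding CC_def by (rule Cb_nonneg[OF sG])

lemma err_bound:
  assumes N: "N \<ge> 3" and x: "x \<le> N"
  shows "\<bar>genA \<alpha> \<alpha>L \<alpha>R \<beta> N (GN N) x - \<alpha> * d2_01 G (real x / real N)\<bar> \<le> \<alpha> * CC / (12 * (real N)^2)"
proof -
  define n where "n = real N"
  have n0: "n > 0" using N by (simp add: n_def)
  have xin: "real x / real N \<in> {0..1}" using x N by auto
  have d2: "d2_01 G (real x / real N) = Sf2 (bc G) (real x / real N)" by (rule d2_G[OF a GS xin])
  have rhs0: "0 \<le> \<alpha> * CC / (12 * (real N)^2)" using a CC_nonneg by simp
  consider "x = 0" | "x = N" | "1 \<le> x \<and> x \<le> N - 1" using x by linarith
  then show ?thesis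
  proof cases
    case 1
    then show ?thesis using genA_out[of x N] d2 Sf2_0 rhs0 by simp
  next
    case 2
    then show ?thesis using genA_out[of x N] d2 Sf2_1 rhs0 N by simp
  next
    case 3
    define y where "y = real x / n"
    define h where "h = 1 / n"
    have g: "genA \<alpha> \<alpha>L \<alpha>R \<beta> N (GN N) x = \<alpha> * n^2 * (SS (y + h) + SS (y - h) - 2 * SS y)"
      using genA_GN[OF N] 3 by (simp add: y_def h_def n_def)
    have "genA \<alpha> \<alpha>L \<alpha>R \<beta> N (GN N) x - \<alpha> * d2_01 G (real x / real N)
        = \<alpha> * n^2 * (SS (y + h) + SS (y - h) - 2 * SS y - h^2 * Sf2 (bc G) y)"
      unfolding g d2 using n0 by (simp add: y_def h_def n_def algebra_simps power2_eq_square)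
    also have "\<bar>\<dots>\<bar> = \<alpha> * n^2 * \<bar>SS (y + h) + SS (y - h) - 2 * SS y - h^2 * Sf2 (bc G) y\<bar>"
      using a by (simp add: abs_mult)
    also have "\<dots> \<le> \<alpha> * n^2 * (h^4 / 12 * CC)"
      unfolding SS_def CC_def using a
      by (intro mult_left_mono second_diff[OF sG]) auto
    also have "\<dots> = \<alpha> * CC / (12 * (real N)^2)"
      using n0 by (simp add: h_def n_def field_simps power2_eq_square eval_nat_numeral)
    finally show ?thesis .
  qed
qed

lemma approx_bound:
  assumes N: "N \<ge> 3" and x: "x \<le> N"
  shows "\<bar>GN N (real x / real N) - G (real x / real N)\<bar> \<le> \<bar>pp N\<bar> + \<bar>qq N\<bar>"
proof -
  have n0: "real N > 0" using N by simp
  consider "x = 0" | "x = N" | "1 \<le> x \<and> x \<le> N - 1" using x by linarith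
  then show ?thesis
  proof cases
    case 1
    then show ?thesis using G_eq_Sf[OF a GS, of 0] Sf_0 by (simp add: GN_def)
  next
    case 2
    then show ?thesis using G_eq_Sf[OF a GS, of 1] Sf_1 n0 by (simp add: GN_def)
  next
    case 3
    define y where "y = real x / real N"
    have y: "0 < y" "y < 1" using 3 n0 N by (auto simp: y_def divide_less_eq)
    have "GN N y - G y = pp N * (1 - y) + qq N * y"
      using GN_int[of N y] y N G_eq_Sf[OF a GS, of y] by (simp add: SS_def algebra_simps)
    also have "\<bar>\<dots>\<bar> \<le> \<bar>pp N\<bar> * 1 + \<bar>qq N\<bar> * 1"
      using y by (intro order.trans[OF abs_triangle_ineq] add_mono) (auto simp: abs_mult intro!: mult_right_le_one_le)
    finally show ?thesis by (simp add: y_def)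
  qed
qed

lemma aLN_bound: "N \<ge> 1 \<Longrightarrow> \<bar>aLN N\<bar> \<le> real N * EE N"
proof -
  assume N: "N \<ge> 1"
  have n0: "real N > 0" using N by simp
  have p0: "real N powr \<beta> > 0" using n0 by simp
  have "\<bar>aLN N\<bar> \<le> \<alpha> / \<alpha>L * real N powr \<beta> + 1"
    unfolding aLN_def using a aL p0 by (simp add: abs_if)
  also have "\<dots> \<le> (\<alpha> / \<alpha>L + \<alpha> / \<alpha>R) * real N powr \<beta> + 1"
    using a aR p0 by (simp add: distrib_right)
  also have "\<dots> = real N * EE N"
    unfolding EE_def using n0 by (simp add: powr_diff field_simps)
  finally show ?thesis .
qed

lemma aRN_bound: "N \<ge> 1 \<Longrightarrow> \<bar>aRN N\<bar> \<le> real N * EE N"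
proof -
  assume N: "N \<ge> 1"
  have n0: "real N > 0" using N by simp
  have p0: "real N powr \<beta> > 0" using n0 by simp
  have "\<bar>aRN N\<bar> \<le> \<alpha> / \<alpha>R * real N powr \<beta> + 1"
    unfolding aRN_def using a aR p0 by (simp add: abs_if)
  also have "\<dots> \<le> (\<alpha> / \<alpha>L + \<alpha> / \<alpha>R) * real N powr \<beta> + 1"
    using a aL p0 by (simp add: distrib_right)
  also have "\<dots> = real N * EE N"
    unfolding EE_def using n0 by (simp add: powr_diff field_simps)
  finally show ?thesis .
qed

lemma g1_bound: "N \<ge> 1 \<Longrightarrow> \<bar>g1 N\<bar> \<le> CC / real N"
  using Sf_small(1)[OF sG, of "1 / real N"] unfolding g1_def SS_def CC_def by simp

lemma gr_bound: "N \<ge> 1 \<Longrightarrow> \<bar>gr N\<bar> \<le> CC / real N"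
proof -
  assume N: "N \<ge> 1"
  have "real (N - 1) / real N = 1 - 1 / real N" using N by (simp add: field_simps)
  then show ?thesis
    using Sf_small(2)[OF sG, of "1 / real N"] unfolding gr_def SS_def CC_def by simp
qed

lemma EE_nonneg: "EE N \<ge> 0"
  unfolding EE_def using a aL aR by simp

lemma dd_bound: "N \<ge> 3 \<Longrightarrow> \<bar>dd N\<bar> \<le> 6 * CC * EE N / real N"
proof -
  assume N: "N \<ge> 3"
  have n0: "real N > 0" using N by simp
  have num: "\<bar>aRN N * gr N - aLN N * g1 N\<bar> \<le> 2 * CC * EE N"
  proof -
    have t1: "\<bar>aRN N\<bar> * \<bar>gr N\<bar> \<le> (real N * EE N) * (CC / real N)"
      by (rule mult_mono[OF aRN_bound gr_bound]) (use N EE_nonneg n0 in auto)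
    have t2: "\<bar>aLN N\<bar> * \<bar>g1 N\<bar> \<le> (real N * EE N) * (CC / real N)"
      by (rule mult_mono[OF aLN_bound g1_bound]) (use N EE_nonneg n0 in auto)
    have "\<bar>aRN N * gr N - aLN N * g1 N\<bar> \<le> \<bar>aRN N\<bar> * \<bar>gr N\<bar> + \<bar>aLN N\<bar> * \<bar>g1 N\<bar>"
      using abs_triangle_ineq4[of "aRN N * gr N" "aLN N * g1 N"] by (simp add: abs_mult)
    also have "\<dots> \<le> 2 * CC * EE N"
    proof -
      have "(real N * EE N) * (CC / real N) = CC * EE N" using n0 by simp
      then show ?thesis using t1 t2 by linarith
    qed
    finally show ?thesis .
  qed
  have D: "real N + aLN N + aRN N \<ge> real N / 3" by (rule den_pos[OF N])
  have "\<bar>dd N\<bar> = \<bar>aRN N * gr N - aLN N * g1 N\<bar> / (real N + aLN N + aRN N)"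
  proof -
    have "real N + aLN N + aRN N > 0" using D n0 by linarith
    then show ?thesis unfolding dd_def abs_divide by simp
  qed
  also have "\<dots> \<le> (2 * CC * EE N) / (real N / 3)"
    by (rule frac_le[OF _ num _ D]) (use n0 CC_nonneg EE_nonneg in auto)
  also have "\<dots> = 6 * CC * EE N / real N" by simp
  finally show ?thesis .
qed

lemma pp_bound: "N \<ge> 3 \<Longrightarrow> \<bar>pp N\<bar> \<le> CC * EE N + 6 * CC * EE N ^ 2"
proof -
  assume N: "N \<ge> 3"
  have n0: "real N > 0" using N by simp
  have "\<bar>pp N\<bar> \<le> \<bar>aLN N\<bar> * (\<bar>g1 N\<bar> + \<bar>dd N\<bar>)"
    unfolding pp_def abs_mult by (intro mult_left_mono abs_triangle_ineq) auto
  also have "\<dots> \<le> (real N * EE N) * (CC / real N + 6 * CC * EE N / real N)"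
  proof (rule mult_mono[OF aLN_bound])
    show "\<bar>g1 N\<bar> + \<bar>dd N\<bar> \<le> CC / real N + 6 * CC * EE N / real N"
      by (rule add_mono[OF g1_bound dd_bound[OF N]]) (use N in auto)
  qed (use N EE_nonneg n0 in auto)
  also have "\<dots> = CC * EE N + 6 * CC * EE N ^ 2"
    using n0 by (simp add: field_simps power2_eq_square)
  finally show ?thesis .
qed

lemma qq_bound: "N \<ge> 3 \<Longrightarrow> \<bar>qq N\<bar> \<le> CC * EE N + 6 * CC * EE N ^ 2"
proof -
  assume N: "N \<ge> 3"
  have n0: "real N > 0" using N by simp
  have "\<bar>qq N\<bar> \<le> \<bar>aRN N\<bar> * (\<bar>gr N\<bar> + \<bar>dd N\<bar>)"
    unfolding qq_def abs_mult by (intro mult_left_mono abs_triangle_ineq4) auto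
  also have "\<dots> \<le> (real N * EE N) * (CC / real N + 6 * CC * EE N / real N)"
  proof (rule mult_mono[OF aRN_bound])
    show "\<bar>gr N\<bar> + \<bar>dd N\<bar> \<le> CC / real N + 6 * CC * EE N / real N"
      by (rule add_mono[OF gr_bound dd_bound[OF N]]) (use N in auto)
  qed (use N EE_nonneg n0 in auto)
  also have "\<dots> = CC * EE N + 6 * CC * EE N ^ 2"
    using n0 by (simp add: field_simps power2_eq_square)
  finally show ?thesis .
qed

lemma EE_lim: "EE \<longlonglongrightarrow> 0"
proof -
  have "(\<lambda>N. real N powr (\<beta> - 1)) \<longlonglongrightarrow> 0"
    by (rule tendsto_neg_powr[OF _ filterlim_real_sequentially]) (use b1 in simp)
  then have "(\<lambda>N. (\<alpha> / \<alpha>L + \<alpha> / \<alpha>R) * real N powr (\<beta> - 1) + 1 / real N) \<longlonglongrightarrow> (\<alpha> / \<alpha>L + \<alpha> / \<alpha>R) * 0 + 0"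
    by (intro tendsto_intros)
  then show ?thesis unfolding EE_def[abs_def] by simp
qed

lemma Max_bound:
  fixes f :: "nat \<Rightarrow> real"
  assumes "\<And>x. x \<in> {0..N} \<Longrightarrow> 0 \<le> f x \<and> f x \<le> B"
  shows "0 \<le> Max (f ` {0..N}) \<and> Max (f ` {0..N}) \<le> B"
proof
  have m: "f 0 \<le> Max (f ` {0..N})" by (intro Max_ge) auto
  have "0 \<le> f 0" using assms[of 0] by simp
  then show "0 \<le> Max (f ` {0..N})" using m by linarith
  show "Max (f ` {0..N}) \<le> B" using assms by (subst Max_le_iff) auto
qed

lemma main_ctx:
  "\<exists>GN :: nat \<Rightarrow> real \<Rightarrow> real.
           (\<forall>N. GN N 0 = 0 \<and> GN N 1 = 0) \<and>
           (\<lambda>N. Max ((\<lambda>x. \<bar>GN N (real x / real N) - G (real x / real N)\<bar>) ` {0..N}))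
              \<longlonglongrightarrow> 0 \<and>
           (\<lambda>N. Max ((\<lambda>x. \<bar>genA \<alpha> \<alpha>L \<alpha>R \<beta> N (GN N) x - \<alpha> * d2_01 G (real x / real N)\<bar>)
                       ` {0..N})) \<longlonglongrightarrow> 0"
proof (intro exI[of _ GN] conjI allI)
  fix N show "GN N 0 = 0" "GN N 1 = 0" by (simp_all add: GN_def)
next
  define B where "B N = 2 * (CC * EE N + 6 * CC * EE N ^ 2)" for N
  have Bl: "B \<longlonglongrightarrow> 0"
  proof -
    have "(\<lambda>N. 2 * (CC * EE N + 6 * CC * EE N ^ 2)) \<longlonglongrightarrow> 2 * (CC * 0 + 6 * CC * 0 ^ 2)"
      by (intro tendsto_intros EE_lim)
    then show ?thesis unfolding B_def[abs_def] by simp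
  qed
  have ev: "eventually (\<lambda>N. 0 \<le> Max ((\<lambda>x. \<bar>GN N (real x / real N) - G (real x / real N)\<bar>) ` {0..N}) \<and>
     Max ((\<lambda>x. \<bar>GN N (real x / real N) - G (real x / real N)\<bar>) ` {0..N}) \<le> B N) sequentially"
    using eventually_ge_at_top[of 3]
  proof eventually_elim
    case (elim N)
    show ?case
    proof (rule Max_bound)
      fix x assume "x \<in> {0..N}"
      then have "\<bar>GN N (real x / real N) - G (real x / real N)\<bar> \<le> \<bar>pp N\<bar> + \<bar>qq N\<bar>"
        using approx_bound[OF elim] by auto
      also have "\<dots> \<le> B N" using pp_bound[OF elim] qq_bound[OF elim] by (simp add: B_def)
      finally show "0 \<le> \<bar>GN N (real x / real N) - G (real x / real N)\<bar> \<and>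
          \<bar>GN N (real x / real N) - G (real x / real N)\<bar> \<le> B N" by simp
    qed
  qed
  show "(\<lambda>N. Max ((\<lambda>x. \<bar>GN N (real x / real N) - G (real x / real N)\<bar>) ` {0..N})) \<longlonglongrightarrow> 0" (is "?M \<longlonglongrightarrow> 0")
  proof (rule tendsto_sandwich[OF _ _ tendsto_const Bl])
    show "eventually (\<lambda>N. 0 \<le> ?M N) sequentially" using ev by (rule eventually_mono) (rule conjunct1)
    show "eventually (\<lambda>N. ?M N \<le> B N) sequentially" using ev by (rule eventually_mono) (rule conjunct2)
  qed
next
  define B where "B N = \<alpha> * CC / 12 * (1 / real N) ^ 2" for N
  have Bl: "B \<longlonglongrightarrow> 0"
  proof -
    have "(\<lambda>N. \<alpha> * CC / 12 * (1 / real N) ^ 2) \<longlonglongrightarrow> \<alpha> * CC / 12 * 0 ^ 2"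
      by (intro tendsto_intros)
    then show ?thesis unfolding B_def[abs_def] by simp
  qed
  have ev: "eventually (\<lambda>N. 0 \<le> Max ((\<lambda>x. \<bar>genA \<alpha> \<alpha>L \<alpha>R \<beta> N (GN N) x - \<alpha> * d2_01 G (real x / real N)\<bar>) ` {0..N}) \<and>
     Max ((\<lambda>x. \<bar>genA \<alpha> \<alpha>L \<alpha>R \<beta> N (GN N) x - \<alpha> * d2_01 G (real x / real N)\<bar>) ` {0..N}) \<le> B N) sequentially"
    using eventually_ge_at_top[of 3]
  proof eventually_elim
    case (elim N)
    show ?case
    proof (rule Max_bound)
      fix x assume "x \<in> {0..N}"
      then have "\<bar>genA \<alpha> \<alpha>L \<alpha>R \<beta> N (GN N) x - \<alpha> * d2_01 G (real x / real N)\<bar> \<le> \<alpha> * CC / (12 * (real N)^2)"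
        using err_bound[OF elim] by auto
      also have "\<dots> = B N" by (simp add: B_def power2_eq_square)
      finally show "0 \<le> \<bar>genA \<alpha> \<alpha>L \<alpha>R \<beta> N (GN N) x - \<alpha> * d2_01 G (real x / real N)\<bar> \<and>
          \<bar>genA \<alpha> \<alpha>L \<alpha>R \<beta> N (GN N) x - \<alpha> * d2_01 G (real x / real N)\<bar> \<le> B N" by simp
    qed
  qed
  show "(\<lambda>N. Max ((\<lambda>x. \<bar>genA \<alpha> \<alpha>L \<alpha>R \<beta> N (GN N) x - \<alpha> * d2_01 G (real x / real N)\<bar>) ` {0..N})) \<longlonglongrightarrow> 0" (is "?M \<longlonglongrightarrow> 0")
  proof (rule tendsto_sandwich[OF _ _ tendsto_const Bl])
    show "eventually (\<lambda>N. 0 \<le> ?M N) sequentially" using ev by (rule eventually_mono) (rule conjunct1)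
    show "eventually (\<lambda>N. ?M N \<le> B N) sequentially" using ev by (rule eventually_mono) (rule conjunct2)
  qed
qed

end

theorem lemma4p2:
  fixes \<alpha> \<alpha>L \<alpha>R \<beta> :: real and G :: "real \<Rightarrow> real"
  assumes "\<alpha> > 0" "\<alpha>L > 0" "\<alpha>R > 0" "0 \<le> \<beta>" "\<beta> < 1"
    and "in_S \<alpha> G"
  shows "\<exists>GN :: nat \<Rightarrow> real \<Rightarrow> real.
           (\<forall>N. GN N 0 = 0 \<and> GN N 1 = 0) \<and>
           (\<lambda>N. Max ((\<lambda>x. \<bar>GN N (real x / real N) - G (real x / real N)\<bar>) ` {0..N}))
              \<longlonglongrightarrow> 0 \<and>
           (\<lambda>N. Max ((\<lambda>x. \<bar>genA \<alpha> \<alpha>L \<alpha>R \<beta> N (GN N) x - \<alpha> * d2_01 G (real x / real N)\<bar>)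
                       ` {0..N})) \<longlonglongrightarrow> 0"
  by (rule main_ctx[OF assms])

end
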